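(* Let $t\in\mathbb{R}$, $\mu>0$, $\sigma>0$, $\lambda>0$ with $\lambda\ge(\mu-t)_-$. Let $\mathcal{L}^+_{\lambda}(\mu,\sigma)$ be the set of probability distributions $F$ on $\mathbb{R}$ such that, for $X\sim F$, $\mathbb{E}^F[X]=\mu$, $\mathbb{E}^F[X^2]=\mu^2+\sigma^2$, $F(0-)=0$, and $\mathbb{E}^F[(X-t)_-]\le\lambda$. Then $\mathcal{L}^+_{\lambda}(\mu,\sigma)$ is non-empty if and only if either $\lambda>(\mu-t)_-$, or $\lambda=(\mu-t)_-$ and $\sigma^2\le\mu(t-\mu)$.
   Context: For $x\in\mathbb{R}$, $(x)_-=\max\{-x,0\}$. $F(0-)=\mathbb{P}(X<0)$ under $F$. *)

theory Defs
  imports "HOL-Probability.Probability"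
begin

definition negpart :: "real \<Rightarrow> real" where
  "negpart x = max (- x) 0"

definition Lplus :: "real \<Rightarrow> real \<Rightarrow> real \<Rightarrow> real \<Rightarrow> real measure set" where
  "Lplus t lam mu sig =
     {F. prob_space F \<and> sets F = sets borel \<and>
         integrable F (\<lambda>x. x) \<and> integrable F (\<lambda>x. x ^ 2) \<and>
         (\<integral>x. x \<partial>F) = mu \<and>
         (\<integral>x. x ^ 2 \<partial>F) = mu ^ 2 + sig ^ 2 \<and>
         measure F {..<0} = 0 \<and>
         integrable F (\<lambda>x. negpart (x - t)) \<and>
         (\<integral>x. negpart (x - t) \<partial>F) \<le> lam}"

end

theory Submission imports Defs begin

lemma two_point:
  fixes p A B :: real and g :: "real \<Rightarrow> real"
  assumes p: "0 \<le> p" "p \<le> 1" and gm: "g \<in> borel_measurable borel"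
  defines "F \<equiv> distr (measure_pmf (bernoulli_pmf p)) borel (\<lambda>b. if b then B else A)"
  shows "prob_space F" "sets F = sets borel"
    "integrable F g" "(\<integral>x. g x \<partial>F) = p * g B + (1 - p) * g A"
    "A \<ge> 0 \<Longrightarrow> B \<ge> 0 \<Longrightarrow> measure F {..<0} = 0"
proof -
  have m: "(\<lambda>b. if b then B else A) \<in> measurable (measure_pmf (bernoulli_pmf p)) borel" by simp
  show "prob_space F" unfolding F_def by (rule measure_pmf.prob_space_distr[OF m])
  show "sets F = sets borel" unfolding F_def by simp
  have fin: "finite (set_pmf (bernoulli_pmf p))" by (rule finite_subset[of _ UNIV]) auto
  show "integrable F g" unfolding F_def
    by (subst integrable_distr_eq[OF m gm]) (rule integrable_measure_pmf_finite[OF fin])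
  show "(\<integral>x. g x \<partial>F) = p * g B + (1 - p) * g A" unfolding F_def
    using p by (subst integral_distr[OF m gm]) (simp add: mult.commute)
  assume "A \<ge> 0" "B \<ge> 0"
  then have "(\<lambda>b. if b then B else A) -` {..<0} \<inter> space (measure_pmf (bernoulli_pmf p)) = {}" by (auto split: if_splits)
  then show "measure F {..<0} = 0" unfolding F_def
    by (subst measure_distr[OF m]) auto
qed

lemma negpart_meas[measurable]: "(\<lambda>x. negpart (x - t)) \<in> borel_measurable borel"
  unfolding negpart_def by measurable

lemma construct:
  fixes t mu sig lam eps :: real
  assumes e: "0 < eps" "eps \<le> mu" and sg: "sig > 0"
  defines "p \<equiv> eps^2 / (eps^2 + sig^2)"
  defines "a \<equiv> mu - eps" and "b \<equiv> mu + sig^2 / eps"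
  assumes c: "p * negpart (b - t) + (1 - p) * negpart (a - t) \<le> lam"
  shows "Lplus t lam mu sig \<noteq> {}"
proof -
  define F where "F = distr (measure_pmf (bernoulli_pmf p)) borel (\<lambda>b'. if b' then b else a)"
  have s0: "sig^2 > 0" using sg by simp
  have d0: "eps^2 + sig^2 > 0" using s0 e by (simp add: add_pos_pos)
  have p: "0 \<le> p" "p \<le> 1" unfolding p_def using d0 s0 by (auto simp: divide_simps)
  have 1: "1 - p = sig^2 / (eps^2 + sig^2)" unfolding p_def using d0 e by (simp add: diff_divide_distrib[symmetric] add_divide_distrib[symmetric] divide_simps)
  have ab: "a \<ge> 0" "b \<ge> 0" unfolding a_def b_def using e s0 by auto
  note tp = two_point[OF p, where A=a and B=b, folded F_def]
  have "F \<in> Lplus t lam mu sig"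
    unfolding Lplus_def
  proof (intro CollectI conjI)
    show "prob_space F" "sets F = sets borel" using tp(1,2)[of "\<lambda>x. x"] by auto
    show "integrable F (\<lambda>x. x)" "integrable F (\<lambda>x. x^2)" "integrable F (\<lambda>x. negpart (x - t))"
      by (rule tp(3); simp)+
    show "measure F {..<0} = 0" using tp(5)[of "\<lambda>x. x"] ab by simp
    show "(\<integral>x. negpart (x - t) \<partial>F) \<le> lam" using tp(4)[of "\<lambda>x. negpart (x - t)"] c by simp
    have "(\<integral>x. x \<partial>F) = p * b + (1 - p) * a" using tp(4)[of "\<lambda>x. x"] by simp
    also have "\<dots> = mu + (p * (sig^2/eps) - (1 - p) * eps)" unfolding a_def b_def by algebra
    also have "p * (sig^2/eps) = eps * sig^2 / (eps^2 + sig^2)" unfolding p_def using e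
      by (simp add: power2_eq_square)
    also have "(1 - p) * eps = eps * sig^2 / (eps^2 + sig^2)" unfolding 1 by simp
    also have "mu + (eps * sig^2 / (eps^2 + sig^2) - eps * sig^2 / (eps^2 + sig^2)) = mu" by simp
    finally show "(\<integral>x. x \<partial>F) = mu" .
    have "(\<integral>x. x^2 \<partial>F) = p * b^2 + (1 - p) * a^2" using tp(4)[of "\<lambda>x. x^2"] by simp
    also have "\<dots> = mu^2 + 2*mu*(p * (sig^2/eps) - (1 - p) * eps) + (p * (sig^2/eps)^2 + (1-p)*eps^2)"
      unfolding a_def b_def by algebra
    also have "p * (sig^2/eps) = eps * sig^2 / (eps^2 + sig^2)" unfolding p_def using e
      by (simp add: power2_eq_square)
    also have "(1 - p) * eps = eps * sig^2 / (eps^2 + sig^2)" unfolding 1 by simp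
    also have "p * (sig^2/eps)^2 = sig^2 * sig^2 / (eps^2 + sig^2)" unfolding p_def using e
      by (simp add: power2_eq_square)
    also have "(1-p)*eps^2 = sig^2 * eps^2 / (eps^2 + sig^2)" unfolding 1 by simp
    also have "sig^2 * sig^2 / (eps^2 + sig^2) + sig^2 * eps^2 / (eps^2 + sig^2) = sig^2"
      using d0 by (simp add: add_divide_distrib[symmetric] divide_simps algebra_simps)
    finally show "(\<integral>x. x^2 \<partial>F) = mu^2 + sig^2" by simp
  qed
  then show ?thesis by blast
qed

lemma necessity:
  fixes t mu sig lam :: real
  assumes F: "F \<in> Lplus t lam mu sig" and L: "lam = t - mu"
  shows "sig ^ 2 \<le> mu * (t - mu)"
proof -
  from F have ps: "prob_space F" and sF: "sets F = sets borel"
    and i1: "integrable F (\<lambda>x. x)" and i2: "integrable F (\<lambda>x. x ^ 2)"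
    and m1: "(\<integral>x. x \<partial>F) = mu" and m2: "(\<integral>x. x ^ 2 \<partial>F) = mu ^ 2 + sig ^ 2"
    and m0: "measure F {..<0} = 0" and i3: "integrable F (\<lambda>x. negpart (x - t))"
    and le: "(\<integral>x. negpart (x - t) \<partial>F) \<le> lam"
    unfolding Lplus_def by auto
  interpret prob_space F by (rule ps)
  have meas[measurable]: "{..<(0::real)} \<in> sets F" using sF by simp
  have sp: "space F = UNIV" using sets_eq_imp_space_eq[OF sF] by simp
  have ic: "integrable F (\<lambda>x. t)" by simp
  define h where "h x = negpart (x - t) - (t - x)" for x
  have ih: "integrable F h" unfolding h_def using i3 i1 ic by auto
  have h0: "\<And>x. h x \<ge> 0" unfolding h_def negpart_def by auto
  have "(\<integral>x. h x \<partial>F) = (\<integral>x. negpart (x - t) \<partial>F) - (t - mu)"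
    unfolding h_def using i3 i1 ic m1 by (simp add: Bochner_Integration.integral_diff prob_space)
  also have "\<dots> \<le> 0" using le L by simp
  finally have "(\<integral>x. h x \<partial>F) \<le> 0" .
  moreover have "(\<integral>x. h x \<partial>F) \<ge> 0" using h0 by (simp add: integral_nonneg_AE)
  ultimately have "(\<integral>x. h x \<partial>F) = 0" by simp
  then have "AE x in F. h x = 0" using integral_nonneg_eq_0_iff_AE[OF ih] h0 by simp
  then have aet: "AE x in F. x \<le> t"
    by (rule AE_mp) (auto simp: h_def negpart_def)
  have "{..<(0::real)} \<in> null_sets F" using m0 meas
    by (simp add: null_sets_def emeasure_eq_measure)
  then have ae0: "AE x in F. x \<ge> 0"
    by (rule AE_I') (auto simp: sp)
  have "AE x in F. x ^ 2 \<le> t * x"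
    using aet ae0 by eventually_elim (simp add: power2_eq_square mult_right_mono)
  then have "(\<integral>x. x ^ 2 \<partial>F) \<le> (\<integral>x. t * x \<partial>F)"
    using i2 i1 by (intro integral_mono_AE) auto
  then have "mu ^ 2 + sig ^ 2 \<le> t * mu" using m1 m2 by simp
  then show ?thesis by (simp add: algebra_simps power2_eq_square)
qed

theorem proposition3:
  fixes t mu sig lam :: real
  assumes "mu > 0" and "sig > 0" and "lam > 0" and "lam \<ge> negpart (mu - t)"
  shows "Lplus t lam mu sig \<noteq> {} \<longleftrightarrow>
           (lam > negpart (mu - t) \<or>
            (lam = negpart (mu - t) \<and> sig ^ 2 \<le> mu * (t - mu)))"
proof
  assume "Lplus t lam mu sig \<noteq> {}"
  then obtain F where F: "F \<in> Lplus t lam mu sig" by blast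
  show "lam > negpart (mu - t) \<or> (lam = negpart (mu - t) \<and> sig ^ 2 \<le> mu * (t - mu))"
  proof (cases "lam > negpart (mu - t)")
    case False
    then have e: "lam = negpart (mu - t)" using assms(4) by simp
    then have "lam = t - mu" using assms(3) unfolding negpart_def by auto
    then show ?thesis using necessity[OF F] e by simp
  qed simp
next
  assume R: "lam > negpart (mu - t) \<or> (lam = negpart (mu - t) \<and> sig ^ 2 \<le> mu * (t - mu))"
  have s0: "sig^2 > 0" using assms(2) by simp
  show "Lplus t lam mu sig \<noteq> {}"
  proof (cases "lam > negpart (mu - t)")
    case True
    define eps where "eps = min mu (lam - negpart (mu - t))"
    have e: "0 < eps" "eps \<le> mu" unfolding eps_def using True assms(1) by auto
    define p where "p = eps^2 / (eps^2 + sig^2)"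
    have p: "0 \<le> p" "p \<le> 1" unfolding p_def using s0 e
      by (auto simp: divide_simps add_pos_pos)
    define X where "X = negpart (mu + sig^2/eps - t)"
    define Y where "Y = negpart (mu - eps - t)"
    have "sig^2/eps > 0" using e s0 by simp
    then have ab: "mu - eps - t \<le> mu + sig^2/eps - t" using e by simp
    have XY: "X \<le> Y" unfolding X_def Y_def negpart_def using ab by (simp add: max_def)
    have n1: "t - mu \<le> negpart (mu - t)" unfolding negpart_def by simp
    have n2: "eps \<le> lam - negpart (mu - t)" unfolding eps_def by simp
    have Y: "Y \<le> lam" unfolding Y_def negpart_def using n1 n2 assms(3) by (simp add: max_def)
    have "p * X + (1 - p) * Y \<le> p * Y + (1 - p) * Y" using XY p by (simp add: mult_left_mono)
    also have "\<dots> \<le> lam" using Y by (simp add: algebra_simps)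
    finally show ?thesis using construct[OF e assms(2), of t lam] unfolding p_def X_def Y_def by simp
  next
    case False
    then have eq: "lam = negpart (mu - t)" and sle: "sig ^ 2 \<le> mu * (t - mu)" using R by auto
    then have Lt: "lam = t - mu" using assms(3) unfolding negpart_def by auto
    define eps where "eps = sig^2 / (t - mu)"
    have tm: "t - mu > 0" using Lt assms(3) by simp
    have e: "0 < eps" "eps \<le> mu" unfolding eps_def using tm s0 sle
      by (auto simp: divide_simps mult.commute)
    have se: "sig^2 = eps * (t - mu)" unfolding eps_def using tm by simp
    have b: "mu + sig^2/eps = t" using e se by simp
    define p where "p = eps^2 / (eps^2 + sig^2)"
    have "1 - p = sig^2 / (eps^2 + sig^2)" unfolding p_def using s0 e
      by (simp add: diff_divide_distrib[symmetric] add_divide_distrib[symmetric] divide_simps)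
    also have "\<dots> = (eps * (t - mu)) / (eps * (eps + (t - mu)))" unfolding se
      by (simp add: power2_eq_square algebra_simps)
    also have "\<dots> = (t - mu) / (eps + (t - mu))" using e by simp
    finally have p1: "1 - p = (t - mu) / (eps + (t - mu))" .
    have "p * negpart (mu + sig^2/eps - t) + (1 - p) * negpart (mu - eps - t)
        = (1 - p) * (eps + (t - mu))" unfolding b using e tm by (simp add: negpart_def)
    also have "\<dots> = lam" unfolding p1 Lt using e tm by simp
    finally show ?thesis using construct[OF e assms(2), of t lam] unfolding p_def by simp
  qed
qed

end
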